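(* Let $\alpha:U\to V$ be a surjective h-transmission between commutative supertropical monoids, with $M:=eU$, $N:=eV$, $\gamma:=\alpha^\nu$, and let $\alpha=\rho\circ\mu\circ\beta\circ\lambda$ be its canonical factorization, where $\lambda=\pi_{E(U,\mathfrak A)}:U\to\bar U:=U/E(U,\mathfrak A)$ with $\mathfrak A=\mathfrak A_\alpha$, $\beta=\pi_{F(\bar U,\gamma)}:\bar U\to W:=\bar U/F(\bar U,\gamma)$, $\mu=\pi_T:W\to\bar W:=W/T$ with $T$ a tangible MFCE-relation on $W$, and $\rho:\bar W\to V$ an isomorphism over $N$. (i) The factors $\lambda,\beta,\mu,\rho$ are h-transmissions. (ii) If $U$ is a semiring, then $\bar U,W,\bar W,V$ are semirings, and $\lambda,\beta,\mu,\rho$ are semiring homomorphisms.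
   Context: All monoids are commutative. A supertropical monoid is a monoid $(U,\cdot)$ with absorbing element $0$ and distinguished idempotent $e$ with $ex=0\Rightarrow x=0$, together with a total ordering on $M:=eU$, compatible with multiplication and with $0$ least, making $M$ a bipotent semiring (addition $=\max$). $\mathcal T(U):=U\setminus eU$. Define $x+y:=y$ if $ex<ey$, $x$ if $ex>ey$, $ex$ if $ex=ey$; $U$ is a semiring if this addition is associative and distributive. A transmission $\alpha:U\to V$ is a map with $\alpha(0)=0$, $\alpha(1)=1$, multiplicative, $\alpha(e_U)=e_V$, order-preserving on $eU$; $\alpha^\nu$ is its restriction $eU\to eV$; ghost kernel $\mathfrak A_\alpha:=\{x:\alpha(x)\in eV\}$. An h-transmission is a transmission such that $ex<ey$ and $\alpha(ex)=\alpha(ey)$ imply $\alpha(y)\in eV$. For a TE-relation $E$ (multiplicative, order compatible on $M$, $ex\sim_E0\Rightarrow x\sim_E0$), $U/E$ has the unique supertropical monoid structure making $\pi_E$ a transmission. $E(U,\mathfrak A)$ for an ideal $\mathfrak A\supseteq M$: $x\sim y$ iff $x=y$ or ($x,y\in\mathfrak A$, $ex=ey$); ghost ideal of the quotient identified with $M$. $F(U,\gamma)$ for surjective $\gamma:M\to N$: $x\sim y$ iff $x=y$, or $x,y\in M$ with $\gamma(x)=\gamma(y)$, or $\gamma(ex)=\gamma(ey)=0$; ghost ideal of the quotient identified with $N$. An MFCE-relation is a multiplicative equivalence relation with $x\sim y\Rightarrow ex=ey$; it is tangible if each ghost element is equivalent only to itself. An isomorphism over $N$ is one whose ghost part is $\mathrm{id}_N$.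 (By the paper, every surjective transmission has a unique such canonical factorization.) *)

theory Defs
  imports Main
begin

text \<open>Commutative supertropical monoids, represented by carrier sets.
  stm_e is the distinguished idempotent e, stm_le the total order on the ghost ideal eU.\<close>

record 'a stm =
  stm_carrier :: "'a set"
  stm_mul :: "'a \<Rightarrow> 'a \<Rightarrow> 'a"
  stm_one :: 'a
  stm_zero :: 'a
  stm_e :: 'a
  stm_le :: "'a \<Rightarrow> 'a \<Rightarrow> bool"

definition ghosts :: "('a, 'm) stm_scheme \<Rightarrow> 'a set" where
  "ghosts U = (\<lambda>x. stm_mul U (stm_e U) x) ` stm_carrier U"

definition stm_lt :: "('a, 'm) stm_scheme \<Rightarrow> 'a \<Rightarrow> 'a \<Rightarrow> bool" where
  "stm_lt U x y \<longleftrightarrow> stm_le U x y \<and> x \<noteq> y"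

definition supertropical_monoid :: "('a, 'm) stm_scheme \<Rightarrow> bool" where
  "supertropical_monoid U \<longleftrightarrow>
     (let C = stm_carrier U; mul = stm_mul U; e = stm_e U; M = ghosts U; le = stm_le U in
      stm_one U \<in> C \<and> stm_zero U \<in> C \<and> e \<in> C \<and>
      (\<forall>x\<in>C. \<forall>y\<in>C. mul x y \<in> C) \<and>
      (\<forall>x\<in>C. \<forall>y\<in>C. \<forall>z\<in>C. mul (mul x y) z = mul x (mul y z)) \<and>
      (\<forall>x\<in>C. \<forall>y\<in>C. mul x y = mul y x) \<and>
      (\<forall>x\<in>C. mul (stm_one U) x = x) \<and>
      (\<forall>x\<in>C. mul (stm_zero U) x = stm_zero U) \<and>
      mul e e = e \<and>
      (\<forall>x\<in>C. mul e x = stm_zero U \<longrightarrow> x = stm_zero U) \<and>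
      (\<forall>x\<in>M. le x x) \<and>
      (\<forall>x\<in>M. \<forall>y\<in>M. le x y \<and> le y x \<longrightarrow> x = y) \<and>
      (\<forall>x\<in>M. \<forall>y\<in>M. \<forall>z\<in>M. le x y \<and> le y z \<longrightarrow> le x z) \<and>
      (\<forall>x\<in>M. \<forall>y\<in>M. le x y \<or> le y x) \<and>
      (\<forall>x\<in>M. \<forall>y\<in>M. \<forall>z\<in>M. le x y \<longrightarrow> le (mul x z) (mul y z)) \<and>
      (\<forall>x\<in>M. le (stm_zero U) x))"

definition stm_add :: "('a, 'm) stm_scheme \<Rightarrow> 'a \<Rightarrow> 'a \<Rightarrow> 'a" where
  "stm_add U x y =
     (let ex = stm_mul U (stm_e U) x; ey = stm_mul U (stm_e U) y in
      if stm_lt U ex ey then y else if stm_lt U ey ex then x else ex)"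

definition is_semiring :: "('a, 'm) stm_scheme \<Rightarrow> bool" where
  "is_semiring U \<longleftrightarrow>
     (\<forall>x\<in>stm_carrier U. \<forall>y\<in>stm_carrier U. \<forall>z\<in>stm_carrier U.
        stm_add U (stm_add U x y) z = stm_add U x (stm_add U y z) \<and>
        stm_mul U x (stm_add U y z) = stm_add U (stm_mul U x y) (stm_mul U x z))"

definition transmission :: "('a, 'm) stm_scheme \<Rightarrow> ('b, 'n) stm_scheme \<Rightarrow> ('a \<Rightarrow> 'b) \<Rightarrow> bool" where
  "transmission U V f \<longleftrightarrow>
     (\<forall>x\<in>stm_carrier U. f x \<in> stm_carrier V) \<and>
     f (stm_zero U) = stm_zero V \<and> f (stm_one U) = stm_one V \<and>
     (\<forall>x\<in>stm_carrier U. \<forall>y\<in>stm_carrier U. f (stm_mul U x y) = stm_mul V (f x) (f y)) \<and>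
     f (stm_e U) = stm_e V \<and>
     (\<forall>x\<in>ghosts U. \<forall>y\<in>ghosts U. stm_le U x y \<longrightarrow> stm_le V (f x) (f y))"

definition h_transmission :: "('a, 'm) stm_scheme \<Rightarrow> ('b, 'n) stm_scheme \<Rightarrow> ('a \<Rightarrow> 'b) \<Rightarrow> bool" where
  "h_transmission U V f \<longleftrightarrow> transmission U V f \<and>
     (\<forall>x\<in>stm_carrier U. \<forall>y\<in>stm_carrier U.
        stm_lt U (stm_mul U (stm_e U) x) (stm_mul U (stm_e U) y) \<and>
        f (stm_mul U (stm_e U) x) = f (stm_mul U (stm_e U) y) \<longrightarrow> f y \<in> ghosts V)"

definition ghost_kernel :: "('a, 'm) stm_scheme \<Rightarrow> ('b, 'n) stm_scheme \<Rightarrow> ('a \<Rightarrow> 'b) \<Rightarrow> 'a set" where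
  "ghost_kernel U V f = {x \<in> stm_carrier U. f x \<in> ghosts V}"

text \<open>Bijective transmission (the inverse is then automatically a transmission).\<close>
definition stm_iso :: "('a, 'm) stm_scheme \<Rightarrow> ('b, 'n) stm_scheme \<Rightarrow> ('a \<Rightarrow> 'b) \<Rightarrow> bool" where
  "stm_iso U V f \<longleftrightarrow> transmission U V f \<and> bij_betw f (stm_carrier U) (stm_carrier V)"

definition semiring_hom :: "('a, 'm) stm_scheme \<Rightarrow> ('b, 'n) stm_scheme \<Rightarrow> ('a \<Rightarrow> 'b) \<Rightarrow> bool" where
  "semiring_hom U V f \<longleftrightarrow>
     (\<forall>x\<in>stm_carrier U. f x \<in> stm_carrier V) \<and>
     f (stm_zero U) = stm_zero V \<and> f (stm_one U) = stm_one V \<and>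
     (\<forall>x\<in>stm_carrier U. \<forall>y\<in>stm_carrier U.
        f (stm_mul U x y) = stm_mul V (f x) (f y) \<and> f (stm_add U x y) = stm_add V (f x) (f y))"

text \<open>Quotients by an equivalence relation r (assumed to be a TE-relation):
  equivalence classes, operations via representatives, and the induced order on ghosts
  (the unique one making the projection a transmission).\<close>

definition cls :: "('a, 'm) stm_scheme \<Rightarrow> ('a \<Rightarrow> 'a \<Rightarrow> bool) \<Rightarrow> 'a \<Rightarrow> 'a set" where
  "cls U r x = {y \<in> stm_carrier U. r x y}"

definition quot :: "('a, 'm) stm_scheme \<Rightarrow> ('a \<Rightarrow> 'a \<Rightarrow> bool) \<Rightarrow> 'a set stm" where
  "quot U r =
     \<lparr> stm_carrier = cls U r ` stm_carrier U,
       stm_mul = (\<lambda>X Y. cls U r (stm_mul U (SOME x. x \<in> X) (SOME y. y \<in> Y))),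
       stm_one = cls U r (stm_one U),
       stm_zero = cls U r (stm_zero U),
       stm_e = cls U r (stm_e U),
       stm_le = (\<lambda>X Y. \<exists>x\<in>X. \<exists>y\<in>Y. x \<in> ghosts U \<and> y \<in> ghosts U \<and> stm_le U x y) \<rparr>"

definition E_rel :: "('a, 'm) stm_scheme \<Rightarrow> 'a set \<Rightarrow> 'a \<Rightarrow> 'a \<Rightarrow> bool" where
  "E_rel U A x y \<longleftrightarrow> x = y \<or>
     (x \<in> A \<and> y \<in> A \<and> stm_mul U (stm_e U) x = stm_mul U (stm_e U) y)"

definition F_rel :: "('a, 'm) stm_scheme \<Rightarrow> ('b, 'n) stm_scheme \<Rightarrow> ('a \<Rightarrow> 'b) \<Rightarrow> 'a \<Rightarrow> 'a \<Rightarrow> bool" where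
  "F_rel U V \<gamma> x y \<longleftrightarrow> x = y \<or>
     (x \<in> ghosts U \<and> y \<in> ghosts U \<and> \<gamma> x = \<gamma> y) \<or>
     (\<gamma> (stm_mul U (stm_e U) x) = stm_zero V \<and> \<gamma> (stm_mul U (stm_e U) y) = stm_zero V)"

definition MFCE :: "('a, 'm) stm_scheme \<Rightarrow> ('a \<Rightarrow> 'a \<Rightarrow> bool) \<Rightarrow> bool" where
  "MFCE U r \<longleftrightarrow>
     (\<forall>x\<in>stm_carrier U. r x x) \<and>
     (\<forall>x\<in>stm_carrier U. \<forall>y\<in>stm_carrier U. r x y \<longrightarrow> r y x) \<and>
     (\<forall>x\<in>stm_carrier U. \<forall>y\<in>stm_carrier U. \<forall>z\<in>stm_carrier U. r x y \<and> r y z \<longrightarrow> r x z) \<and>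
     (\<forall>x\<in>stm_carrier U. \<forall>y\<in>stm_carrier U. \<forall>z\<in>stm_carrier U.
        r x y \<longrightarrow> r (stm_mul U x z) (stm_mul U y z)) \<and>
     (\<forall>x\<in>stm_carrier U. \<forall>y\<in>stm_carrier U.
        r x y \<longrightarrow> stm_mul U (stm_e U) x = stm_mul U (stm_e U) y)"

definition tangible_rel :: "('a, 'm) stm_scheme \<Rightarrow> ('a \<Rightarrow> 'a \<Rightarrow> bool) \<Rightarrow> bool" where
  "tangible_rel U r \<longleftrightarrow> (\<forall>x\<in>ghosts U. \<forall>y\<in>stm_carrier U. r x y \<longrightarrow> y = x)"

end

theory Submission
  imports Defs
begin


context
  fixes U :: "('a,'m) stm_scheme"
  assumes U: "supertropical_monoid U"
begin

lemma sm_D: "stm_one U \<in> stm_carrier U \<and> stm_zero U \<in> stm_carrier U \<and> stm_e U \<in> stm_carrier U \<and>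
      (\<forall>x\<in>stm_carrier U. \<forall>y\<in>stm_carrier U. stm_mul U x y \<in> stm_carrier U) \<and>
      (\<forall>x\<in>stm_carrier U. \<forall>y\<in>stm_carrier U. \<forall>z\<in>stm_carrier U. stm_mul U (stm_mul U x y) z = stm_mul U x (stm_mul U y z)) \<and>
      (\<forall>x\<in>stm_carrier U. \<forall>y\<in>stm_carrier U. stm_mul U x y = stm_mul U y x) \<and>
      (\<forall>x\<in>stm_carrier U. stm_mul U (stm_one U) x = x) \<and>
      (\<forall>x\<in>stm_carrier U. stm_mul U (stm_zero U) x = stm_zero U) \<and>
      stm_mul U (stm_e U) (stm_e U) = stm_e U \<and>
      (\<forall>x\<in>stm_carrier U. stm_mul U (stm_e U) x = stm_zero U \<longrightarrow> x = stm_zero U) \<and>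
      (\<forall>x\<in>ghosts U. stm_le U x x) \<and>
      (\<forall>x\<in>ghosts U. \<forall>y\<in>ghosts U. stm_le U x y \<and> stm_le U y x \<longrightarrow> x = y) \<and>
      (\<forall>x\<in>ghosts U. \<forall>y\<in>ghosts U. \<forall>z\<in>ghosts U. stm_le U x y \<and> stm_le U y z \<longrightarrow> stm_le U x z) \<and>
      (\<forall>x\<in>ghosts U. \<forall>y\<in>ghosts U. stm_le U x y \<or> stm_le U y x) \<and>
      (\<forall>x\<in>ghosts U. \<forall>y\<in>ghosts U. \<forall>z\<in>ghosts U. stm_le U x y \<longrightarrow> stm_le U (stm_mul U x z) (stm_mul U y z)) \<and>
      (\<forall>x\<in>ghosts U. stm_le U (stm_zero U) x)"
  using U unfolding supertropical_monoid_def Let_def .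

lemma sm_one_in: "stm_one U \<in> stm_carrier U" using sm_D by (rule conjunct1)
lemma sm_zero_in: "stm_zero U \<in> stm_carrier U" using sm_D by (elim conjE)
lemma sm_e_in: "stm_e U \<in> stm_carrier U" using sm_D by (elim conjE)
lemma sm_closed: "x \<in> stm_carrier U \<Longrightarrow> y \<in> stm_carrier U \<Longrightarrow> stm_mul U x y \<in> stm_carrier U"
  using sm_D by (elim conjE) (drule bspec, assumption, drule bspec, assumption)
lemma sm_assoc: "x \<in> stm_carrier U \<Longrightarrow> y \<in> stm_carrier U \<Longrightarrow> z \<in> stm_carrier U \<Longrightarrow>
   stm_mul U (stm_mul U x y) z = stm_mul U x (stm_mul U y z)"
proof -
  have H: "\<forall>x\<in>stm_carrier U. \<forall>y\<in>stm_carrier U. \<forall>z\<in>stm_carrier U. stm_mul U (stm_mul U x y) z = stm_mul U x (stm_mul U y z)"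
    using sm_D by (elim conjE)
  show "x \<in> stm_carrier U \<Longrightarrow> y \<in> stm_carrier U \<Longrightarrow> z \<in> stm_carrier U \<Longrightarrow> ?thesis" using H by blast
qed
lemma sm_comm: "x \<in> stm_carrier U \<Longrightarrow> y \<in> stm_carrier U \<Longrightarrow> stm_mul U x y = stm_mul U y x"
proof -
  have H: "\<forall>x\<in>stm_carrier U. \<forall>y\<in>stm_carrier U. stm_mul U x y = stm_mul U y x" using sm_D by (elim conjE)
  show "x \<in> stm_carrier U \<Longrightarrow> y \<in> stm_carrier U \<Longrightarrow> ?thesis" using H by blast
qed
lemma sm_one: "x \<in> stm_carrier U \<Longrightarrow> stm_mul U (stm_one U) x = x"
proof -
  have H: "\<forall>x\<in>stm_carrier U. stm_mul U (stm_one U) x = x" using sm_D by (elim conjE)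
  show "x \<in> stm_carrier U \<Longrightarrow> ?thesis" using H by blast
qed
lemma sm_zero: "x \<in> stm_carrier U \<Longrightarrow> stm_mul U (stm_zero U) x = stm_zero U"
proof -
  have H: "\<forall>x\<in>stm_carrier U. stm_mul U (stm_zero U) x = stm_zero U" using sm_D by (elim conjE)
  show "x \<in> stm_carrier U \<Longrightarrow> ?thesis" using H by blast
qed
lemma sm_ee: "stm_mul U (stm_e U) (stm_e U) = stm_e U"
  using sm_D by (elim conjE)
lemma sm_antisym: "x \<in> ghosts U \<Longrightarrow> y \<in> ghosts U \<Longrightarrow> stm_le U x y \<Longrightarrow> stm_le U y x \<Longrightarrow> x = y"
proof -
  have H: "\<forall>x\<in>ghosts U. \<forall>y\<in>ghosts U. stm_le U x y \<and> stm_le U y x \<longrightarrow> x = y" using sm_D by (elim conjE)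
  show "x \<in> ghosts U \<Longrightarrow> y \<in> ghosts U \<Longrightarrow> stm_le U x y \<Longrightarrow> stm_le U y x \<Longrightarrow> x = y" using H by blast
qed
lemma sm_total: "x \<in> ghosts U \<Longrightarrow> y \<in> ghosts U \<Longrightarrow> stm_le U x y \<or> stm_le U y x"
proof -
  have H: "\<forall>x\<in>ghosts U. \<forall>y\<in>ghosts U. stm_le U x y \<or> stm_le U y x" using sm_D by (elim conjE)
  show "x \<in> ghosts U \<Longrightarrow> y \<in> ghosts U \<Longrightarrow> ?thesis" using H by blast
qed

lemma ghost_e: "x \<in> stm_carrier U \<Longrightarrow> stm_mul U (stm_e U) x \<in> ghosts U"
  by (simp add: ghosts_def)
lemma ghost_in: "x \<in> ghosts U \<Longrightarrow> x \<in> stm_carrier U"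
  using sm_closed sm_e_in by (auto simp: ghosts_def)
lemma e_e: "x \<in> stm_carrier U \<Longrightarrow> stm_mul U (stm_e U) (stm_mul U (stm_e U) x) = stm_mul U (stm_e U) x"
  using sm_assoc[of "stm_e U" "stm_e U" x] sm_ee sm_e_in by simp
lemma ghost_fix: "g \<in> ghosts U \<Longrightarrow> stm_mul U (stm_e U) g = g"
  using e_e by (auto simp: ghosts_def)
lemma ghost_ideal: "g \<in> ghosts U \<Longrightarrow> z \<in> stm_carrier U \<Longrightarrow> stm_mul U g z \<in> ghosts U"
proof -
  assume g: "g \<in> ghosts U" and z: "z \<in> stm_carrier U"
  then obtain x where x: "x \<in> stm_carrier U" "g = stm_mul U (stm_e U) x" by (auto simp: ghosts_def)
  then have "stm_mul U g z = stm_mul U (stm_e U) (stm_mul U x z)" using sm_assoc sm_e_in z by simp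
  then show ?thesis using ghost_e sm_closed x z by simp
qed

lemma e_mul: "x \<in> stm_carrier U \<Longrightarrow> z \<in> stm_carrier U \<Longrightarrow>
   stm_mul U (stm_e U) (stm_mul U x z) = stm_mul U (stm_mul U (stm_e U) x) z"
  using sm_assoc sm_e_in by simp

lemma add_closed: "x \<in> stm_carrier U \<Longrightarrow> y \<in> stm_carrier U \<Longrightarrow> stm_add U x y \<in> stm_carrier U"
  using sm_closed sm_e_in by (simp add: stm_add_def Let_def)

end

definition level :: "('a,'m) stm_scheme \<Rightarrow> ('b,'n) stm_scheme \<Rightarrow> ('a \<Rightarrow> 'b) \<Rightarrow> bool" where
"level U Y \<psi> \<longleftrightarrow>
  stm_carrier Y = \<psi> ` stm_carrier U \<and>
  (\<forall>x\<in>stm_carrier U. \<forall>y\<in>stm_carrier U. \<psi> (stm_mul U x y) = stm_mul Y (\<psi> x) (\<psi> y)) \<and>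
  \<psi> (stm_e U) = stm_e Y \<and> \<psi> (stm_zero U) = stm_zero Y \<and> \<psi> (stm_one U) = stm_one Y \<and>
  (\<forall>x\<in>stm_carrier U. \<forall>y\<in>stm_carrier U.
     stm_le U (stm_mul U (stm_e U) x) (stm_mul U (stm_e U) y) \<longrightarrow>
     stm_le Y (\<psi> (stm_mul U (stm_e U) x)) (\<psi> (stm_mul U (stm_e U) y))) \<and>
  (\<forall>x\<in>stm_carrier U. \<forall>y\<in>stm_carrier U.
     stm_le Y (\<psi> (stm_mul U (stm_e U) x)) (\<psi> (stm_mul U (stm_e U) y)) \<longrightarrow>
     (\<exists>x'\<in>stm_carrier U. \<exists>y'\<in>stm_carrier U.
        \<psi> (stm_mul U (stm_e U) x') = \<psi> (stm_mul U (stm_e U) x) \<and>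
        \<psi> (stm_mul U (stm_e U) y') = \<psi> (stm_mul U (stm_e U) y) \<and>
        stm_le U (stm_mul U (stm_e U) x') (stm_mul U (stm_e U) y')))"

context
  fixes U :: "('a,'m) stm_scheme" and Y :: "('b,'n) stm_scheme" and \<psi>
  assumes U: "supertropical_monoid U" and L: "level U Y \<psi>"
begin

lemma L_car: "stm_carrier Y = \<psi> ` stm_carrier U" using L by (simp add: level_def)
lemma L_in: "x \<in> stm_carrier U \<Longrightarrow> \<psi> x \<in> stm_carrier Y" using L_car by simp
lemma L_mul: "x \<in> stm_carrier U \<Longrightarrow> y \<in> stm_carrier U \<Longrightarrow> \<psi> (stm_mul U x y) = stm_mul Y (\<psi> x) (\<psi> y)"
  using L by (simp add: level_def)
lemma L_e: "\<psi> (stm_e U) = stm_e Y" using L by (simp add: level_def)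
lemma L_0: "\<psi> (stm_zero U) = stm_zero Y" using L by (simp add: level_def)
lemma L_1: "\<psi> (stm_one U) = stm_one Y" using L by (simp add: level_def)
lemma L_mono: "x \<in> stm_carrier U \<Longrightarrow> y \<in> stm_carrier U \<Longrightarrow>
     stm_le U (stm_mul U (stm_e U) x) (stm_mul U (stm_e U) y) \<Longrightarrow>
     stm_le Y (\<psi> (stm_mul U (stm_e U) x)) (\<psi> (stm_mul U (stm_e U) y))"
  using L by (simp add: level_def)
lemma L_refl: "x \<in> stm_carrier U \<Longrightarrow> y \<in> stm_carrier U \<Longrightarrow>
     stm_le Y (\<psi> (stm_mul U (stm_e U) x)) (\<psi> (stm_mul U (stm_e U) y)) \<Longrightarrow>
     (\<exists>x'\<in>stm_carrier U. \<exists>y'\<in>stm_carrier U.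
        \<psi> (stm_mul U (stm_e U) x') = \<psi> (stm_mul U (stm_e U) x) \<and>
        \<psi> (stm_mul U (stm_e U) y') = \<psi> (stm_mul U (stm_e U) y) \<and>
        stm_le U (stm_mul U (stm_e U) x') (stm_mul U (stm_e U) y'))"
  using L unfolding level_def by blast
lemma L_ee: "x \<in> stm_carrier U \<Longrightarrow> \<psi> (stm_mul U (stm_e U) x) = stm_mul Y (stm_e Y) (\<psi> x)"
  using L_mul L_e sm_e_in[OF U] by simp
lemma L_ghosts: "G \<in> ghosts Y \<longleftrightarrow> (\<exists>x\<in>stm_carrier U. G = \<psi> (stm_mul U (stm_e U) x))"
  using L_ee L_car by (auto simp: ghosts_def)
lemma L_comm: "X \<in> stm_carrier Y \<Longrightarrow> Z \<in> stm_carrier Y \<Longrightarrow> stm_mul Y X Z = stm_mul Y Z X"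
proof -
  assume "X \<in> stm_carrier Y" "Z \<in> stm_carrier Y"
  then obtain x z where "x \<in> stm_carrier U" "z \<in> stm_carrier U" "X = \<psi> x" "Z = \<psi> z" using L_car by auto
  then show ?thesis using L_mul sm_comm[OF U] by metis
qed
lemma L_closed: "X \<in> stm_carrier Y \<Longrightarrow> Z \<in> stm_carrier Y \<Longrightarrow> stm_mul Y X Z \<in> stm_carrier Y"
proof -
  assume "X \<in> stm_carrier Y" "Z \<in> stm_carrier Y"
  then obtain x z where "x \<in> stm_carrier U" "z \<in> stm_carrier U" "X = \<psi> x" "Z = \<psi> z" using L_car by auto
  then show ?thesis using L_mul sm_closed[OF U] L_in by metis
qed
end

lemma level_id: "supertropical_monoid U \<Longrightarrow> level U U (\<lambda>x. x)"
  unfolding level_def by auto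


definition equivr :: "('b,'n) stm_scheme \<Rightarrow> ('b \<Rightarrow> 'b \<Rightarrow> bool) \<Rightarrow> bool" where
"equivr Y r \<longleftrightarrow> (\<forall>x\<in>stm_carrier Y. r x x) \<and>
     (\<forall>x\<in>stm_carrier Y. \<forall>y\<in>stm_carrier Y. r x y \<longrightarrow> r y x) \<and>
     (\<forall>x\<in>stm_carrier Y. \<forall>y\<in>stm_carrier Y. \<forall>z\<in>stm_carrier Y. r x y \<and> r y z \<longrightarrow> r x z) \<and>
     (\<forall>x\<in>stm_carrier Y. \<forall>y\<in>stm_carrier Y. \<forall>z\<in>stm_carrier Y.
        r x y \<longrightarrow> r (stm_mul Y x z) (stm_mul Y y z))"

lemma equivr_D:
  assumes "equivr Y r"
  shows equivr_refl: "\<And>a. a \<in> stm_carrier Y \<Longrightarrow> r a a"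
  and equivr_sym: "\<And>a b. a \<in> stm_carrier Y \<Longrightarrow> b \<in> stm_carrier Y \<Longrightarrow> r a b \<Longrightarrow> r b a"
  and equivr_trans: "\<And>a b c. a \<in> stm_carrier Y \<Longrightarrow> b \<in> stm_carrier Y \<Longrightarrow> c \<in> stm_carrier Y \<Longrightarrow> r a b \<Longrightarrow> r b c \<Longrightarrow> r a c"
  and equivr_mul: "\<And>a b c. a \<in> stm_carrier Y \<Longrightarrow> b \<in> stm_carrier Y \<Longrightarrow> c \<in> stm_carrier Y \<Longrightarrow> r a b \<Longrightarrow> r (stm_mul Y a c) (stm_mul Y b c)"
  using assms unfolding equivr_def by blast+

lemma cls_mem: "equivr Y r \<Longrightarrow> x \<in> stm_carrier Y \<Longrightarrow> x \<in> cls Y r x"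
  by (simp add: equivr_def cls_def)

lemma cls_eq: "equivr Y r \<Longrightarrow> x \<in> stm_carrier Y \<Longrightarrow> y \<in> stm_carrier Y \<Longrightarrow>
   cls Y r x = cls Y r y \<longleftrightarrow> r x y"
proof -
  assume r: "equivr Y r" and x: "x \<in> stm_carrier Y" and y: "y \<in> stm_carrier Y"
  have rf: "\<And>a. a \<in> stm_carrier Y \<Longrightarrow> r a a" using r unfolding equivr_def by blast
  have sy: "\<And>a b. a \<in> stm_carrier Y \<Longrightarrow> b \<in> stm_carrier Y \<Longrightarrow> r a b \<Longrightarrow> r b a"
    using r unfolding equivr_def by blast
  have tr: "\<And>a b c. a \<in> stm_carrier Y \<Longrightarrow> b \<in> stm_carrier Y \<Longrightarrow> c \<in> stm_carrier Y \<Longrightarrow> r a b \<Longrightarrow> r b c \<Longrightarrow> r a c"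
    using r unfolding equivr_def by blast
  show ?thesis
  proof
    assume "cls Y r x = cls Y r y"
    moreover have "y \<in> cls Y r y" using rf y by (simp add: cls_def)
    ultimately have "y \<in> cls Y r x" by simp
    then show "r x y" by (simp add: cls_def)
  next
    assume xy: "r x y"
    show "cls Y r x = cls Y r y"
      unfolding cls_def using xy sy tr x y by blast
  qed
qed

lemma cls_memD: "equivr Y r \<Longrightarrow> x \<in> stm_carrier Y \<Longrightarrow> z \<in> cls Y r x \<Longrightarrow>
   z \<in> stm_carrier Y \<and> cls Y r z = cls Y r x"
proof -
  assume r: "equivr Y r" and x: "x \<in> stm_carrier Y" and z: "z \<in> cls Y r x"
  then have zC: "z \<in> stm_carrier Y" and "r x z" by (auto simp: cls_def)
  then have "cls Y r x = cls Y r z" using cls_eq[OF r x zC] by simp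
  then show ?thesis using zC by simp
qed

lemma cls_some: "equivr Y r \<Longrightarrow> x \<in> stm_carrier Y \<Longrightarrow>
   (SOME z. z \<in> cls Y r x) \<in> stm_carrier Y \<and> cls Y r (SOME z. z \<in> cls Y r x) = cls Y r x"
  by (meson cls_memD cls_mem someI)

lemma level_quot:
  assumes U: "supertropical_monoid U" and L: "level U Y \<psi>" and r: "equivr Y r"
  shows "level U (quot Y r) (\<lambda>x. cls Y r (\<psi> x))"
proof -
  let ?q = "cls Y r"
  have mulq: "stm_mul (quot Y r) (?q X) (?q Z) = ?q (stm_mul Y X Z)"
    if X: "X \<in> stm_carrier Y" and Z: "Z \<in> stm_carrier Y" for X Z
  proof -
    define s where "s = (SOME z. z \<in> ?q X)"
    define t where "t = (SOME z. z \<in> ?q Z)"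
    have s: "s \<in> stm_carrier Y" "r X s" using cls_some[OF r X] cls_eq[OF r] X unfolding s_def by auto
    have t: "t \<in> stm_carrier Y" "r Z t" using cls_some[OF r Z] cls_eq[OF r] Z unfolding t_def by auto
    have r1: "r (stm_mul Y X Z) (stm_mul Y s Z)" using equivr_mul[OF r X s(1) Z s(2)] .
    have r2: "r (stm_mul Y Z s) (stm_mul Y t s)" using equivr_mul[OF r Z t(1) s(1) t(2)] .
    have r2': "r (stm_mul Y s Z) (stm_mul Y s t)" using r2 L_comm[OF U L] s t Z by simp
    have "r (stm_mul Y X Z) (stm_mul Y s t)"
      using equivr_trans[OF r _ _ _ r1 r2'] L_closed[OF U L] s t X Z by blast
    then have "?q (stm_mul Y X Z) = ?q (stm_mul Y s t)"
      using cls_eq[OF r] L_closed[OF U L] s t X Z by blast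
    then show ?thesis by (simp add: quot_def s_def t_def)
  qed
  show ?thesis unfolding level_def
  proof (intro conjI ballI impI)
    show "stm_carrier (quot Y r) = (\<lambda>x. ?q (\<psi> x)) ` stm_carrier U"
      using L_car[OF U L] by (auto simp: quot_def)
  next
    fix x y assume "x \<in> stm_carrier U" "y \<in> stm_carrier U"
    then show "?q (\<psi> (stm_mul U x y)) = stm_mul (quot Y r) (?q (\<psi> x)) (?q (\<psi> y))"
      using mulq L_in[OF U L] L_mul[OF U L] by simp
  next
    show "?q (\<psi> (stm_e U)) = stm_e (quot Y r)" using L_e[OF U L] by (simp add: quot_def)
  next
    show "?q (\<psi> (stm_zero U)) = stm_zero (quot Y r)" using L_0[OF U L] by (simp add: quot_def)
  next
    show "?q (\<psi> (stm_one U)) = stm_one (quot Y r)" using L_1[OF U L] by (simp add: quot_def)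
  next
    fix x y assume x: "x \<in> stm_carrier U" and y: "y \<in> stm_carrier U"
      and le: "stm_le U (stm_mul U (stm_e U) x) (stm_mul U (stm_e U) y)"
    have ex: "\<psi> (stm_mul U (stm_e U) x) \<in> ghosts Y" "\<psi> (stm_mul U (stm_e U) y) \<in> ghosts Y"
      using L_ghosts[OF U L] x y by auto
    have "\<psi> (stm_mul U (stm_e U) x) \<in> ?q (\<psi> (stm_mul U (stm_e U) x))"
         "\<psi> (stm_mul U (stm_e U) y) \<in> ?q (\<psi> (stm_mul U (stm_e U) y))"
      using cls_mem[OF r] L_in[OF U L] sm_closed[OF U] sm_e_in[OF U] x y by auto
    then show "stm_le (quot Y r) (?q (\<psi> (stm_mul U (stm_e U) x))) (?q (\<psi> (stm_mul U (stm_e U) y)))"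
      using ex L_mono[OF U L x y le] by (auto simp: quot_def)
  next
    fix x y assume x: "x \<in> stm_carrier U" and y: "y \<in> stm_carrier U"
      and le: "stm_le (quot Y r) (?q (\<psi> (stm_mul U (stm_e U) x))) (?q (\<psi> (stm_mul U (stm_e U) y)))"
    obtain P Q where PQ: "P \<in> ?q (\<psi> (stm_mul U (stm_e U) x))" "Q \<in> ?q (\<psi> (stm_mul U (stm_e U) y))"
      "P \<in> ghosts Y" "Q \<in> ghosts Y" "stm_le Y P Q" using le by (auto simp: quot_def)
    obtain a b where ab: "a \<in> stm_carrier U" "b \<in> stm_carrier U"
      "P = \<psi> (stm_mul U (stm_e U) a)" "Q = \<psi> (stm_mul U (stm_e U) b)"
      using PQ L_ghosts[OF U L] by auto
    obtain a' b' where a'b': "a' \<in> stm_carrier U" "b' \<in> stm_carrier U"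
      "\<psi> (stm_mul U (stm_e U) a') = P" "\<psi> (stm_mul U (stm_e U) b') = Q"
      "stm_le U (stm_mul U (stm_e U) a') (stm_mul U (stm_e U) b')"
      using L_refl[OF U L ab(1,2)] PQ ab by auto
    have inx: "\<psi> (stm_mul U (stm_e U) x) \<in> stm_carrier Y" "\<psi> (stm_mul U (stm_e U) y) \<in> stm_carrier Y"
      using L_in[OF U L] sm_closed[OF U] sm_e_in[OF U] x y by auto
    have q1: "?q P = ?q (\<psi> (stm_mul U (stm_e U) x))" using cls_memD[OF r inx(1) PQ(1)] by (rule conjunct2)
    have q2: "?q Q = ?q (\<psi> (stm_mul U (stm_e U) y))" using cls_memD[OF r inx(2) PQ(2)] by (rule conjunct2)
    have "?q (\<psi> (stm_mul U (stm_e U) a')) = ?q (\<psi> (stm_mul U (stm_e U) x))" using a'b'(3) q1 by simp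
    moreover have "?q (\<psi> (stm_mul U (stm_e U) b')) = ?q (\<psi> (stm_mul U (stm_e U) y))" using a'b'(4) q2 by simp
    ultimately show "\<exists>x'\<in>stm_carrier U. \<exists>y'\<in>stm_carrier U.
        ?q (\<psi> (stm_mul U (stm_e U) x')) = ?q (\<psi> (stm_mul U (stm_e U) x)) \<and>
        ?q (\<psi> (stm_mul U (stm_e U) y')) = ?q (\<psi> (stm_mul U (stm_e U) y)) \<and>
        stm_le U (stm_mul U (stm_e U) x') (stm_mul U (stm_e U) y')"
      using a'b'(1,2,5) by blast
  qed
qed


lemma add_pres:
  fixes U :: "('a,'m) stm_scheme" and Y :: "('b,'n) stm_scheme" and f :: "'a \<Rightarrow> 'b"
  assumes U: "supertropical_monoid U"
  and fe: "\<And>x. x \<in> stm_carrier U \<Longrightarrow> f (stm_mul U (stm_e U) x) = stm_mul Y (stm_e Y) (f x)"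
  and mono: "\<And>x y. x \<in> stm_carrier U \<Longrightarrow> y \<in> stm_carrier U \<Longrightarrow>
     stm_le U (stm_mul U (stm_e U) x) (stm_mul U (stm_e U) y) \<Longrightarrow>
     stm_le Y (f (stm_mul U (stm_e U) x)) (f (stm_mul U (stm_e U) y))"
  and anti: "\<And>x y. x \<in> stm_carrier U \<Longrightarrow> y \<in> stm_carrier U \<Longrightarrow>
     stm_le Y (f (stm_mul U (stm_e U) x)) (f (stm_mul U (stm_e U) y)) \<Longrightarrow>
     stm_le Y (f (stm_mul U (stm_e U) y)) (f (stm_mul U (stm_e U) x)) \<Longrightarrow>
     f (stm_mul U (stm_e U) x) = f (stm_mul U (stm_e U) y)"
  and hp: "\<And>x y. x \<in> stm_carrier U \<Longrightarrow> y \<in> stm_carrier U \<Longrightarrow>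
     stm_lt U (stm_mul U (stm_e U) x) (stm_mul U (stm_e U) y) \<Longrightarrow>
     f (stm_mul U (stm_e U) x) = f (stm_mul U (stm_e U) y) \<Longrightarrow> f y = f (stm_mul U (stm_e U) y)"
  and a: "a \<in> stm_carrier U" and b: "b \<in> stm_carrier U"
  shows "f (stm_add U a b) = stm_add Y (f a) (f b)"
proof -
  let ?ea = "stm_mul U (stm_e U) a" and ?eb = "stm_mul U (stm_e U) b"
  have ga: "?ea \<in> ghosts U" and gb: "?eb \<in> ghosts U" using a b by (auto simp: ghosts_def)
  have R: "stm_add Y (f a) (f b) =
      (if stm_lt Y (f ?ea) (f ?eb) then f b else if stm_lt Y (f ?eb) (f ?ea) then f a else f ?ea)"
    unfolding stm_add_def Let_def using fe a b by simp
  have L: "stm_add U a b = (if stm_lt U ?ea ?eb then b else if stm_lt U ?eb ?ea then a else ?ea)"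
    unfolding stm_add_def Let_def by simp
  show ?thesis
  proof (cases "stm_lt U ?ea ?eb")
    case True
    then have l: "stm_add U a b = b" using L by simp
    have le: "stm_le Y (f ?ea) (f ?eb)" using mono a b True by (simp add: stm_lt_def)
    show ?thesis
    proof (cases "f ?ea = f ?eb")
      case eq: True
      then have fb: "f b = f ?eb" using hp a b True by blast
      have n1: "\<not> stm_lt Y (f ?ea) (f ?eb)" "\<not> stm_lt Y (f ?eb) (f ?ea)" using eq by (auto simp: stm_lt_def)
      have "stm_add Y (f a) (f b) = f ?ea" using R n1 by (simp only: if_False)
      then show ?thesis using l fb eq by simp
    next
      case False
      then have "stm_lt Y (f ?ea) (f ?eb)" using le by (simp add: stm_lt_def)
      then have "stm_add Y (f a) (f b) = f b" using R by (simp only: if_True)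
      then show ?thesis using l by simp
    qed
  next
    case nlt: False
    show ?thesis
    proof (cases "stm_lt U ?eb ?ea")
      case True
      then have l: "stm_add U a b = a" using L nlt by simp
      have le: "stm_le Y (f ?eb) (f ?ea)" using mono a b True by (simp add: stm_lt_def)
      show ?thesis
      proof (cases "f ?ea = f ?eb")
        case eq: True
        then have fa: "f a = f ?ea" using hp a b True by metis
        have n1: "\<not> stm_lt Y (f ?ea) (f ?eb)" "\<not> stm_lt Y (f ?eb) (f ?ea)" using eq by (auto simp: stm_lt_def)
        have "stm_add Y (f a) (f b) = f ?ea" using R n1 by (simp only: if_False)
        then show ?thesis using l fa by simp
      next
        case False
        then have "\<not> stm_le Y (f ?ea) (f ?eb)" using anti a b le by metis
        then have n1: "\<not> stm_lt Y (f ?ea) (f ?eb)" by (simp add: stm_lt_def)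
        have n2: "stm_lt Y (f ?eb) (f ?ea)" using le False by (simp add: stm_lt_def)
        have "stm_add Y (f a) (f b) = f a" using R n1 n2 by (simp only: if_False if_True)
        then show ?thesis using l by simp
      qed
    next
      case False
      then have eq: "?ea = ?eb" using nlt sm_total[OF U ga gb] by (auto simp: stm_lt_def)
      have l: "stm_add U a b = ?ea" using L nlt False by (simp only: if_False)
      have n1: "\<not> stm_lt Y (f ?ea) (f ?eb)" "\<not> stm_lt Y (f ?eb) (f ?ea)" using eq by (auto simp: stm_lt_def)
      have "stm_add Y (f a) (f b) = f ?ea" using R n1 by (simp only: if_False)
      then show ?thesis using l by simp
    qed
  qed
qed

lemma semiring_transfer:
  fixes U :: "('a,'m) stm_scheme" and Y :: "('b,'n) stm_scheme" and f :: "'a \<Rightarrow> 'b"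
  assumes U: "supertropical_monoid U" and S: "is_semiring U"
  and car: "stm_carrier Y = f ` stm_carrier U"
  and fm: "\<And>x y. x \<in> stm_carrier U \<Longrightarrow> y \<in> stm_carrier U \<Longrightarrow> f (stm_mul U x y) = stm_mul Y (f x) (f y)"
  and fa: "\<And>x y. x \<in> stm_carrier U \<Longrightarrow> y \<in> stm_carrier U \<Longrightarrow> f (stm_add U x y) = stm_add Y (f x) (f y)"
  shows "is_semiring Y"
  unfolding is_semiring_def
proof (intro ballI)
  fix X Z W assume "X \<in> stm_carrier Y" "Z \<in> stm_carrier Y" "W \<in> stm_carrier Y"
  then obtain x z w where xzw: "x \<in> stm_carrier U" "z \<in> stm_carrier U" "w \<in> stm_carrier U"
    "X = f x" "Z = f z" "W = f w" using car by auto
  have s: "stm_add U (stm_add U x z) w = stm_add U x (stm_add U z w)"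
    "stm_mul U x (stm_add U z w) = stm_add U (stm_mul U x z) (stm_mul U x w)"
    using S xzw unfolding is_semiring_def by auto
  show "stm_add Y (stm_add Y X Z) W = stm_add Y X (stm_add Y Z W) \<and>
        stm_mul Y X (stm_add Y Z W) = stm_add Y (stm_mul Y X Z) (stm_mul Y X W)"
    using s xzw fa fm add_closed[OF U] sm_closed[OF U] by metis
qed


lemma level_trans:
  assumes U: "supertropical_monoid U" and L: "level U Y \<psi>"
  shows "transmission U Y \<psi>"
  unfolding transmission_def
proof (intro conjI ballI impI)
  fix g h assume g: "g \<in> ghosts U" and h: "h \<in> ghosts U" and le: "stm_le U g h"
  obtain x y where "x \<in> stm_carrier U" "y \<in> stm_carrier U"
    "g = stm_mul U (stm_e U) x" "h = stm_mul U (stm_e U) y" using g h by (auto simp: ghosts_def)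
  then show "stm_le Y (\<psi> g) (\<psi> h)" using L_mono[OF U L] le by simp
qed (use L_in[OF U L] L_0[OF U L] L_1[OF U L] L_mul[OF U L] L_e[OF U L] in auto)

lemma factor_trans:
  fixes U :: "('a,'m) stm_scheme" and Y :: "('b,'n) stm_scheme" and Z :: "('c,'k) stm_scheme"
  assumes U: "supertropical_monoid U" and L: "level U Y \<psi>"
  and \<phi>in: "\<And>x. x \<in> stm_carrier U \<Longrightarrow> \<phi> x \<in> stm_carrier Z"
  and \<phi>m: "\<And>x y. x \<in> stm_carrier U \<Longrightarrow> y \<in> stm_carrier U \<Longrightarrow> \<phi> (stm_mul U x y) = stm_mul Z (\<phi> x) (\<phi> y)"
  and \<phi>c: "\<phi> (stm_zero U) = stm_zero Z" "\<phi> (stm_one U) = stm_one Z" "\<phi> (stm_e U) = stm_e Z"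
  and g: "\<And>x. x \<in> stm_carrier U \<Longrightarrow> g (\<psi> x) = \<phi> x"
  and mono: "\<And>x y. x \<in> stm_carrier U \<Longrightarrow> y \<in> stm_carrier U \<Longrightarrow>
     stm_le Y (\<psi> (stm_mul U (stm_e U) x)) (\<psi> (stm_mul U (stm_e U) y)) \<Longrightarrow>
     stm_le Z (\<phi> (stm_mul U (stm_e U) x)) (\<phi> (stm_mul U (stm_e U) y))"
  shows "transmission Y Z g"
  unfolding transmission_def
proof (intro conjI ballI impI)
  fix X assume "X \<in> stm_carrier Y" then show "g X \<in> stm_carrier Z" using L_car[OF U L] g \<phi>in by auto
next
  show "g (stm_zero Y) = stm_zero Z" using g[OF sm_zero_in[OF U]] L_0[OF U L] \<phi>c by simp
next
  show "g (stm_one Y) = stm_one Z" using g[OF sm_one_in[OF U]] L_1[OF U L] \<phi>c by simp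
next
  show "g (stm_e Y) = stm_e Z" using g[OF sm_e_in[OF U]] L_e[OF U L] \<phi>c by simp
next
  fix X X' assume "X \<in> stm_carrier Y" "X' \<in> stm_carrier Y"
  then obtain x x' where "x \<in> stm_carrier U" "x' \<in> stm_carrier U" "X = \<psi> x" "X' = \<psi> x'"
    using L_car[OF U L] by auto
  then show "g (stm_mul Y X X') = stm_mul Z (g X) (g X')"
    using L_mul[OF U L] g \<phi>m sm_closed[OF U] by metis
next
  fix X X' assume "X \<in> ghosts Y" "X' \<in> ghosts Y" and le: "stm_le Y X X'"
  then obtain x x' where "x \<in> stm_carrier U" "x' \<in> stm_carrier U"
     "X = \<psi> (stm_mul U (stm_e U) x)" "X' = \<psi> (stm_mul U (stm_e U) x')"
    using L_ghosts[OF U L] by auto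
  then show "stm_le Z (g X) (g X')" using mono le g sm_closed[OF U] sm_e_in[OF U] by metis
qed

lemma factor_hom:
  fixes U :: "('a,'m) stm_scheme" and Y :: "('b,'n) stm_scheme" and Z :: "('c,'k) stm_scheme"
  assumes U: "supertropical_monoid U" and car: "stm_carrier Y = \<psi> ` stm_carrier U"
  and \<psi>m: "\<And>x y. x \<in> stm_carrier U \<Longrightarrow> y \<in> stm_carrier U \<Longrightarrow> \<psi> (stm_mul U x y) = stm_mul Y (\<psi> x) (\<psi> y)"
  and \<psi>a: "\<And>x y. x \<in> stm_carrier U \<Longrightarrow> y \<in> stm_carrier U \<Longrightarrow> \<psi> (stm_add U x y) = stm_add Y (\<psi> x) (\<psi> y)"
  and \<psi>c: "\<psi> (stm_zero U) = stm_zero Y" "\<psi> (stm_one U) = stm_one Y"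
  and \<phi>in: "\<And>x. x \<in> stm_carrier U \<Longrightarrow> \<phi> x \<in> stm_carrier Z"
  and \<phi>m: "\<And>x y. x \<in> stm_carrier U \<Longrightarrow> y \<in> stm_carrier U \<Longrightarrow> \<phi> (stm_mul U x y) = stm_mul Z (\<phi> x) (\<phi> y)"
  and \<phi>a: "\<And>x y. x \<in> stm_carrier U \<Longrightarrow> y \<in> stm_carrier U \<Longrightarrow> \<phi> (stm_add U x y) = stm_add Z (\<phi> x) (\<phi> y)"
  and \<phi>c: "\<phi> (stm_zero U) = stm_zero Z" "\<phi> (stm_one U) = stm_one Z"
  and g: "\<And>x. x \<in> stm_carrier U \<Longrightarrow> g (\<psi> x) = \<phi> x"
  shows "semiring_hom Y Z g"
  unfolding semiring_hom_def
proof (intro conjI ballI)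
  fix X assume "X \<in> stm_carrier Y" then show "g X \<in> stm_carrier Z" using car g \<phi>in by auto
next
  show "g (stm_zero Y) = stm_zero Z" using g[OF sm_zero_in[OF U]] \<psi>c \<phi>c by simp
next
  show "g (stm_one Y) = stm_one Z" using g[OF sm_one_in[OF U]] \<psi>c \<phi>c by simp
next
  fix X X' assume "X \<in> stm_carrier Y" "X' \<in> stm_carrier Y"
  then obtain x x' where "x \<in> stm_carrier U" "x' \<in> stm_carrier U" "X = \<psi> x" "X' = \<psi> x'"
    using car by auto
  then show "g (stm_mul Y X X') = stm_mul Z (g X) (g X')"
    and "g (stm_add Y X X') = stm_add Z (g X) (g X')"
    using \<psi>m \<psi>a g \<phi>m \<phi>a sm_closed[OF U] add_closed[OF U] by metis+
qed



theorem theorem5p11: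
  fixes U :: "'a stm" and V :: "'b stm" and \<alpha> :: "'a \<Rightarrow> 'b"
    and T :: "'a set set \<Rightarrow> 'a set set \<Rightarrow> bool" and \<rho> :: "'a set set set \<Rightarrow> 'b"
  assumes U: "supertropical_monoid U" and V: "supertropical_monoid V"
    and h: "h_transmission U V \<alpha>" and surj: "\<alpha> ` stm_carrier U = stm_carrier V"
  defines "\<AA> \<equiv> ghost_kernel U V \<alpha>"
  defines "Ubar \<equiv> quot U (E_rel U \<AA>)" and "lam \<equiv> cls U (E_rel U \<AA>)"
  defines "\<gamma> \<equiv> (\<lambda>X. \<alpha> (stm_mul U (stm_e U) (SOME x. x \<in> X)))"
  defines "W \<equiv> quot Ubar (F_rel Ubar V \<gamma>)" and "\<beta> \<equiv> cls Ubar (F_rel Ubar V \<gamma>)"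
  defines "Wbar \<equiv> quot W T" and "\<mu> \<equiv> cls W T"
  assumes T: "MFCE W T" "tangible_rel W T"
    and \<rho>: "stm_iso Wbar V \<rho>"
    and fact: "\<forall>x\<in>stm_carrier U. \<alpha> x = \<rho> (\<mu> (\<beta> (lam x)))"
  shows "(h_transmission U Ubar lam \<and> h_transmission Ubar W \<beta> \<and>
          h_transmission W Wbar \<mu> \<and> h_transmission Wbar V \<rho>) \<and>
         (is_semiring U \<longrightarrow>
            is_semiring Ubar \<and> is_semiring W \<and> is_semiring Wbar \<and> is_semiring V \<and>
            semiring_hom U Ubar lam \<and> semiring_hom Ubar W \<beta> \<and>
            semiring_hom W Wbar \<mu> \<and> semiring_hom Wbar V \<rho>)"
proof -
  let ?C = "stm_carrier U"
  let ?e = "stm_mul U (stm_e U)"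
  have tr: "transmission U V \<alpha>" using h by (simp add: h_transmission_def)
  have \<alpha>in: "\<And>x. x \<in> ?C \<Longrightarrow> \<alpha> x \<in> stm_carrier V" using tr by (simp add: transmission_def)
  have \<alpha>m: "\<And>x y. x \<in> ?C \<Longrightarrow> y \<in> ?C \<Longrightarrow> \<alpha> (stm_mul U x y) = stm_mul V (\<alpha> x) (\<alpha> y)"
    using tr by (simp add: transmission_def)
  have \<alpha>c: "\<alpha> (stm_zero U) = stm_zero V" "\<alpha> (stm_one U) = stm_one V" "\<alpha> (stm_e U) = stm_e V"
    using tr by (simp_all add: transmission_def)
  have \<alpha>e: "\<And>x. x \<in> ?C \<Longrightarrow> \<alpha> (?e x) = stm_mul V (stm_e V) (\<alpha> x)"
    using \<alpha>m \<alpha>c sm_e_in[OF U] by simp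
  have \<alpha>mono: "\<And>x y. x \<in> ?C \<Longrightarrow> y \<in> ?C \<Longrightarrow> stm_le U (?e x) (?e y) \<Longrightarrow> stm_le V (\<alpha> (?e x)) (\<alpha> (?e y))"
    using tr ghost_e[OF U] unfolding transmission_def by blast
  have \<alpha>h: "\<And>x y. x \<in> ?C \<Longrightarrow> y \<in> ?C \<Longrightarrow> stm_lt U (?e x) (?e y) \<Longrightarrow> \<alpha> (?e x) = \<alpha> (?e y) \<Longrightarrow> \<alpha> y \<in> ghosts V"
    using h unfolding h_transmission_def by blast
  have \<alpha>g: "\<And>x. x \<in> ?C \<Longrightarrow> \<alpha> (?e x) \<in> ghosts V" using \<alpha>e \<alpha>in ghost_e[OF V] by simp
  have Adef: "\<And>x. x \<in> \<AA> \<longleftrightarrow> x \<in> ?C \<and> \<alpha> x \<in> ghosts V" by (simp add: \<AA>_def ghost_kernel_def)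
  have eA: "\<And>x. x \<in> ?C \<Longrightarrow> ?e x \<in> \<AA>" using Adef \<alpha>g sm_closed[OF U] sm_e_in[OF U] by simp
  have Aid: "\<And>x z. x \<in> \<AA> \<Longrightarrow> z \<in> ?C \<Longrightarrow> stm_mul U x z \<in> \<AA>"
    using Adef \<alpha>m \<alpha>in ghost_ideal[OF V] sm_closed[OF U] by simp
  have Eeq: "equivr U (E_rel U \<AA>)"
    unfolding equivr_def
  proof (intro conjI ballI impI)
    fix x y z assume "x \<in> ?C" "y \<in> ?C" "z \<in> ?C" "E_rel U \<AA> x y"
    then show "E_rel U \<AA> (stm_mul U x z) (stm_mul U y z)"
      using Aid e_mul[OF U] unfolding E_rel_def by metis
  qed (auto simp: E_rel_def)
  have L1: "level U Ubar lam"
    using level_quot[OF U level_id[OF U] Eeq] unfolding Ubar_def lam_def by simp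
  have lam_eq: "\<And>x y. x \<in> ?C \<Longrightarrow> y \<in> ?C \<Longrightarrow> lam x = lam y \<longleftrightarrow> E_rel U \<AA> x y"
    unfolding lam_def using cls_eq[OF Eeq] by blast
  have Einv: "\<And>x y. x \<in> ?C \<Longrightarrow> y \<in> ?C \<Longrightarrow> E_rel U \<AA> x y \<Longrightarrow>
      (\<alpha> x \<in> ghosts V \<longleftrightarrow> \<alpha> y \<in> ghosts V) \<and> \<alpha> (?e x) = \<alpha> (?e y)"
    using Adef unfolding E_rel_def by metis
  have lamA: "\<And>y. y \<in> \<AA> \<Longrightarrow> lam y = lam (?e y)"
  proof -
    fix y assume y: "y \<in> \<AA>"
    then have yC: "y \<in> ?C" using Adef by simp
    have "E_rel U \<AA> y (?e y)" using y eA[OF yC] e_e[OF U yC] by (simp add: E_rel_def)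
    then show "lam y = lam (?e y)" using lam_eq yC sm_closed[OF U] sm_e_in[OF U] by simp
  qed
  have lam_ghost: "\<And>x y. x \<in> ?C \<Longrightarrow> y \<in> ?C \<Longrightarrow> lam (?e x) = lam (?e y) \<Longrightarrow> ?e x = ?e y"
  proof -
    fix x y assume x: "x \<in> ?C" and y: "y \<in> ?C" and eq: "lam (?e x) = lam (?e y)"
    then have "E_rel U \<AA> (?e x) (?e y)" using lam_eq sm_closed[OF U] sm_e_in[OF U] by simp
    then show "?e x = ?e y" using e_e[OF U x] e_e[OF U y] by (auto simp: E_rel_def)
  qed
  have refl1: "\<And>x y. x \<in> ?C \<Longrightarrow> y \<in> ?C \<Longrightarrow> stm_le Ubar (lam (?e x)) (lam (?e y)) \<Longrightarrow> stm_le U (?e x) (?e y)"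
  proof -
    fix x y assume x: "x \<in> ?C" and y: "y \<in> ?C" and le: "stm_le Ubar (lam (?e x)) (lam (?e y))"
    obtain x' y' where "x' \<in> ?C" "y' \<in> ?C" "lam (?e x') = lam (?e x)" "lam (?e y') = lam (?e y)"
       "stm_le U (?e x') (?e y')" using L_refl[OF U L1 x y le] by blast
    then show "stm_le U (?e x) (?e y)" using lam_ghost x y by metis
  qed
  have \<gamma>lam: "\<And>x. x \<in> ?C \<Longrightarrow> \<gamma> (lam x) = \<alpha> (?e x)"
  proof -
    fix x assume x: "x \<in> ?C"
    define z where "z = (SOME z. z \<in> lam x)"
    have "z \<in> ?C" "lam z = lam x" using cls_some[OF Eeq x] unfolding z_def lam_def by auto
    then have "\<alpha> (?e z) = \<alpha> (?e x)" using Einv lam_eq x by metis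
    then show "\<gamma> (lam x) = \<alpha> (?e x)" by (simp add: \<gamma>_def z_def)
  qed
  have eUbar: "\<And>x. x \<in> ?C \<Longrightarrow> stm_mul Ubar (stm_e Ubar) (lam x) = lam (?e x)"
    using L_ee[OF U L1] by simp
  have ghUbar: "\<And>x. x \<in> ?C \<Longrightarrow> lam x \<in> ghosts Ubar \<longleftrightarrow> \<alpha> x \<in> ghosts V"
  proof -
    fix x assume x: "x \<in> ?C"
    have "lam x \<in> ghosts Ubar \<longleftrightarrow> (\<exists>z\<in>?C. lam x = lam (?e z))" using L_ghosts[OF U L1] by simp
    also have "\<dots> \<longleftrightarrow> (\<exists>z\<in>?C. E_rel U \<AA> x (?e z))"
      using lam_eq x sm_closed[OF U] sm_e_in[OF U] by simp
    also have "\<dots> \<longleftrightarrow> \<alpha> x \<in> ghosts V"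
    proof
      assume "\<exists>z\<in>?C. E_rel U \<AA> x (?e z)"
      then obtain z where z: "z \<in> ?C" "E_rel U \<AA> x (?e z)" by blast
      then show "\<alpha> x \<in> ghosts V" using eA Adef by (auto simp: E_rel_def)
    next
      assume "\<alpha> x \<in> ghosts V"
      then have "x \<in> \<AA>" using Adef x by simp
      then have "E_rel U \<AA> x (?e x)" using eA[OF x] e_e[OF U x] by (simp add: E_rel_def)
      then show "\<exists>z\<in>?C. E_rel U \<AA> x (?e z)" using x by blast
    qed
    finally show "lam x \<in> ghosts Ubar \<longleftrightarrow> \<alpha> x \<in> ghosts V" .
  qed
  define Fp where "Fp = (\<lambda>x y. lam x = lam y \<or> (\<alpha> x \<in> ghosts V \<and> \<alpha> y \<in> ghosts V \<and> \<alpha> (?e x) = \<alpha> (?e y))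
      \<or> (\<alpha> (?e x) = stm_zero V \<and> \<alpha> (?e y) = stm_zero V))"
  have Fpull: "\<And>x y. x \<in> ?C \<Longrightarrow> y \<in> ?C \<Longrightarrow> F_rel Ubar V \<gamma> (lam x) (lam y) \<longleftrightarrow> Fp x y"
  proof -
    fix x y assume x: "x \<in> ?C" and y: "y \<in> ?C"
    have "\<gamma> (lam (?e x)) = \<alpha> (?e x)" "\<gamma> (lam (?e y)) = \<alpha> (?e y)"
      using \<gamma>lam e_e[OF U] x y sm_closed[OF U] sm_e_in[OF U] by auto
    then show "F_rel Ubar V \<gamma> (lam x) (lam y) \<longleftrightarrow> Fp x y"
      unfolding F_rel_def Fp_def using eUbar x y ghUbar \<gamma>lam by simp
  qed
  have Fp_trans: "\<And>x y z. x \<in> ?C \<Longrightarrow> y \<in> ?C \<Longrightarrow> z \<in> ?C \<Longrightarrow> Fp x y \<Longrightarrow> Fp y z \<Longrightarrow> Fp x z"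
  proof -
    fix x y z assume x: "x \<in> ?C" and y: "y \<in> ?C" and z: "z \<in> ?C" and xy: "Fp x y" and yz: "Fp y z"
    have i1: "lam x = lam y \<Longrightarrow> (\<alpha> x \<in> ghosts V \<longleftrightarrow> \<alpha> y \<in> ghosts V) \<and> \<alpha> (?e x) = \<alpha> (?e y)"
      using Einv lam_eq x y by blast
    have i2: "lam y = lam z \<Longrightarrow> (\<alpha> y \<in> ghosts V \<longleftrightarrow> \<alpha> z \<in> ghosts V) \<and> \<alpha> (?e y) = \<alpha> (?e z)"
      using Einv lam_eq y z by blast
    show "Fp x z" using xy yz i1 i2 unfolding Fp_def by metis
  qed
  have Fp_mul: "\<And>x y z. x \<in> ?C \<Longrightarrow> y \<in> ?C \<Longrightarrow> z \<in> ?C \<Longrightarrow> Fp x y \<Longrightarrow> Fp (stm_mul U x z) (stm_mul U y z)"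
  proof -
    fix x y z assume x: "x \<in> ?C" and y: "y \<in> ?C" and z: "z \<in> ?C" and xy: "Fp x y"
    have m1: "\<alpha> (?e (stm_mul U x z)) = stm_mul V (\<alpha> (?e x)) (\<alpha> z)"
      "\<alpha> (?e (stm_mul U y z)) = stm_mul V (\<alpha> (?e y)) (\<alpha> z)"
      using e_mul[OF U] \<alpha>m sm_closed[OF U] sm_e_in[OF U] x y z by auto
    have m2: "\<alpha> (stm_mul U x z) = stm_mul V (\<alpha> x) (\<alpha> z)" "\<alpha> (stm_mul U y z) = stm_mul V (\<alpha> y) (\<alpha> z)"
      using \<alpha>m x y z by auto
    have z0: "stm_mul V (stm_zero V) (\<alpha> z) = stm_zero V" using sm_zero[OF V] \<alpha>in z by simp
    have l: "lam x = lam y \<Longrightarrow> lam (stm_mul U x z) = lam (stm_mul U y z)"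
    proof -
      assume "lam x = lam y"
      then have "E_rel U \<AA> x y" using lam_eq x y by blast
      then have "E_rel U \<AA> (stm_mul U x z) (stm_mul U y z)" using equivr_mul[OF Eeq x y z] by blast
      then show ?thesis using lam_eq sm_closed[OF U] x y z by blast
    qed
    have D: "lam x = lam y \<or> (\<alpha> x \<in> ghosts V \<and> \<alpha> y \<in> ghosts V \<and> \<alpha> (?e x) = \<alpha> (?e y))
      \<or> (\<alpha> (?e x) = stm_zero V \<and> \<alpha> (?e y) = stm_zero V)" using xy by (simp only: Fp_def)
    from D show "Fp (stm_mul U x z) (stm_mul U y z)"
    proof (elim disjE conjE)
      assume "lam x = lam y" then show ?thesis using l by (simp add: Fp_def)
    next
      assume "\<alpha> x \<in> ghosts V" "\<alpha> y \<in> ghosts V" "\<alpha> (?e x) = \<alpha> (?e y)"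
      then show ?thesis using m1 m2 ghost_ideal[OF V] \<alpha>in z by (simp add: Fp_def)
    next
      assume "\<alpha> (?e x) = stm_zero V" "\<alpha> (?e y) = stm_zero V"
      then show ?thesis using m1 z0 by (simp add: Fp_def)
    qed
  qed
  have Feq: "equivr Ubar (F_rel Ubar V \<gamma>)"
    unfolding equivr_def
  proof (intro conjI ballI impI)
    fix X assume "X \<in> stm_carrier Ubar" then show "F_rel Ubar V \<gamma> X X" by (simp add: F_rel_def)
  next
    fix X Y assume "X \<in> stm_carrier Ubar" "Y \<in> stm_carrier Ubar" "F_rel Ubar V \<gamma> X Y"
    then show "F_rel Ubar V \<gamma> Y X" unfolding F_rel_def by auto
  next
    fix X Y Z assume "X \<in> stm_carrier Ubar" "Y \<in> stm_carrier Ubar" "Z \<in> stm_carrier Ubar"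
      and r: "F_rel Ubar V \<gamma> X Y \<and> F_rel Ubar V \<gamma> Y Z"
    then obtain x y z where "x \<in> ?C" "y \<in> ?C" "z \<in> ?C" "X = lam x" "Y = lam y" "Z = lam z"
      using L_car[OF U L1] by auto
    then show "F_rel Ubar V \<gamma> X Z" using r Fpull Fp_trans by metis
  next
    fix X Y Z assume "X \<in> stm_carrier Ubar" "Y \<in> stm_carrier Ubar" "Z \<in> stm_carrier Ubar"
      and r: "F_rel Ubar V \<gamma> X Y"
    then obtain x y z where xyz: "x \<in> ?C" "y \<in> ?C" "z \<in> ?C" "X = lam x" "Y = lam y" "Z = lam z"
      using L_car[OF U L1] by auto
    then have "stm_mul Ubar X Z = lam (stm_mul U x z)" "stm_mul Ubar Y Z = lam (stm_mul U y z)"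
      using L_mul[OF U L1] by auto
    then show "F_rel Ubar V \<gamma> (stm_mul Ubar X Z) (stm_mul Ubar Y Z)"
      using r xyz Fpull Fp_mul sm_closed[OF U] by metis
  qed
  have L2: "level U W (\<lambda>x. \<beta> (lam x))"
    using level_quot[OF U L1 Feq] unfolding W_def \<beta>_def .
  have Teq: "equivr W T" using T(1) unfolding MFCE_def equivr_def by blast
  have L3: "level U Wbar (\<lambda>x. \<mu> (\<beta> (lam x)))"
    using level_quot[OF U L2 Teq] unfolding Wbar_def \<mu>_def .
  let ?p2 = "\<lambda>x. \<beta> (lam x)" and ?p3 = "\<lambda>x. \<mu> (\<beta> (lam x))"
  have \<rho>tr: "transmission Wbar V \<rho>" and \<rho>bij: "bij_betw \<rho> (stm_carrier Wbar) (stm_carrier V)"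
    using \<rho> by (auto simp: stm_iso_def)
  have \<rho>inj: "inj_on \<rho> (stm_carrier Wbar)" using \<rho>bij by (simp add: bij_betw_def)
  have \<rho>mono: "\<And>X Y. X \<in> ghosts Wbar \<Longrightarrow> Y \<in> ghosts Wbar \<Longrightarrow> stm_le Wbar X Y \<Longrightarrow> stm_le V (\<rho> X) (\<rho> Y)"
    using \<rho>tr unfolding transmission_def by blast
  have p3eq: "\<And>x y. x \<in> ?C \<Longrightarrow> y \<in> ?C \<Longrightarrow> ?p3 x = ?p3 y \<longleftrightarrow> \<alpha> x = \<alpha> y"
    using fact \<rho>inj L_in[OF U L3] unfolding inj_on_def by metis
  have anti3: "\<And>x y. x \<in> ?C \<Longrightarrow> y \<in> ?C \<Longrightarrow> stm_le Wbar (?p3 (?e x)) (?p3 (?e y)) \<Longrightarrow>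
      stm_le Wbar (?p3 (?e y)) (?p3 (?e x)) \<Longrightarrow> ?p3 (?e x) = ?p3 (?e y)"
  proof -
    fix x y assume x: "x \<in> ?C" and y: "y \<in> ?C" and l1: "stm_le Wbar (?p3 (?e x)) (?p3 (?e y))"
      and l2: "stm_le Wbar (?p3 (?e y)) (?p3 (?e x))"
    have g: "?p3 (?e x) \<in> ghosts Wbar" "?p3 (?e y) \<in> ghosts Wbar" using L_ghosts[OF U L3] x y by auto
    have ex: "?e x \<in> ?C" "?e y \<in> ?C" using sm_closed[OF U] sm_e_in[OF U] x y by auto
    have "stm_le V (\<alpha> (?e x)) (\<alpha> (?e y))" "stm_le V (\<alpha> (?e y)) (\<alpha> (?e x))"
      using \<rho>mono[OF g l1] \<rho>mono[OF g(2,1) l2] fact ex by auto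
    then have "\<alpha> (?e x) = \<alpha> (?e y)" using sm_antisym[OF V] \<alpha>g x y by blast
    then show "?p3 (?e x) = ?p3 (?e y)" using p3eq ex by blast
  qed
  have mono23: "\<And>x y. x \<in> ?C \<Longrightarrow> y \<in> ?C \<Longrightarrow> stm_le W (?p2 (?e x)) (?p2 (?e y)) \<Longrightarrow>
      stm_le Wbar (?p3 (?e x)) (?p3 (?e y))"
  proof -
    fix x y assume x: "x \<in> ?C" and y: "y \<in> ?C" and le: "stm_le W (?p2 (?e x)) (?p2 (?e y))"
    obtain x' y' where "x' \<in> ?C" "y' \<in> ?C" "?p2 (?e x') = ?p2 (?e x)" "?p2 (?e y') = ?p2 (?e y)"
       "stm_le U (?e x') (?e y')" using L_refl[OF U L2 x y le] by blast
    then show "stm_le Wbar (?p3 (?e x)) (?p3 (?e y))" using L_mono[OF U L3] by metis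
  qed
  have mono12: "\<And>x y. x \<in> ?C \<Longrightarrow> y \<in> ?C \<Longrightarrow> stm_le Ubar (lam (?e x)) (lam (?e y)) \<Longrightarrow>
      stm_le W (?p2 (?e x)) (?p2 (?e y))"
    using refl1 L_mono[OF U L2] by blast
  have muT: "\<And>x y. x \<in> ?C \<Longrightarrow> y \<in> ?C \<Longrightarrow> ?p3 x = ?p3 y \<Longrightarrow> T (?p2 x) (?p2 y)"
    unfolding \<mu>_def using cls_eq[OF Teq] L_in[OF U L2] by blast
  have tang: "\<And>x y. x \<in> ?C \<Longrightarrow> y \<in> ?C \<Longrightarrow> T (?p2 (?e x)) (?p2 y) \<Longrightarrow> ?p2 y = ?p2 (?e x)"
    using T(2) L_ghosts[OF U L2] L_in[OF U L2] unfolding tangible_rel_def by blast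
  have anti2: "\<And>x y. x \<in> ?C \<Longrightarrow> y \<in> ?C \<Longrightarrow> stm_le W (?p2 (?e x)) (?p2 (?e y)) \<Longrightarrow>
      stm_le W (?p2 (?e y)) (?p2 (?e x)) \<Longrightarrow> ?p2 (?e x) = ?p2 (?e y)"
  proof -
    fix x y assume x: "x \<in> ?C" and y: "y \<in> ?C" and l1: "stm_le W (?p2 (?e x)) (?p2 (?e y))"
      and l2: "stm_le W (?p2 (?e y)) (?p2 (?e x))"
    have ex: "?e x \<in> ?C" "?e y \<in> ?C" using sm_closed[OF U] sm_e_in[OF U] x y by auto
    have "?p3 (?e x) = ?p3 (?e y)" using anti3 mono23 x y l1 l2 by blast
    then have "T (?p2 (?e x)) (?p2 (?e y))" using muT ex by blast
    then have "?p2 (?e y) = ?p2 (?e x)" using tang[OF x ex(2)] e_e[OF U y] by simp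
    then show "?p2 (?e x) = ?p2 (?e y)" by simp
  qed
  have anti1: "\<And>x y. x \<in> ?C \<Longrightarrow> y \<in> ?C \<Longrightarrow> stm_le Ubar (lam (?e x)) (lam (?e y)) \<Longrightarrow>
      stm_le Ubar (lam (?e y)) (lam (?e x)) \<Longrightarrow> lam (?e x) = lam (?e y)"
    using refl1 sm_antisym[OF U] ghost_e[OF U] by metis
  have hp: "\<And>x y. x \<in> ?C \<Longrightarrow> y \<in> ?C \<Longrightarrow> stm_lt U (?e x) (?e y) \<Longrightarrow> \<alpha> (?e x) = \<alpha> (?e y) \<Longrightarrow>
      lam y = lam (?e y)"
    using \<alpha>h Adef lamA by blast
  have hp3: "\<And>x y. x \<in> ?C \<Longrightarrow> y \<in> ?C \<Longrightarrow> ?p3 (?e x) = ?p3 (?e y) \<Longrightarrow> \<alpha> (?e x) = \<alpha> (?e y)"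
    using p3eq sm_closed[OF U] sm_e_in[OF U] by blast
  have eC: "\<And>x. x \<in> ?C \<Longrightarrow> ?e x \<in> ?C" using sm_closed[OF U] sm_e_in[OF U] by blast
  have H1: "h_transmission U Ubar lam"
    unfolding h_transmission_def
  proof (intro conjI ballI impI)
    show "transmission U Ubar lam" using level_trans[OF U L1] .
  next
    fix x y assume x: "x \<in> ?C" and y: "y \<in> ?C" and c: "stm_lt U (?e x) (?e y) \<and> lam (?e x) = lam (?e y)"
    then show "lam y \<in> ghosts Ubar" using lam_ghost[OF x y] by (simp add: stm_lt_def)
  qed
  have H2: "h_transmission Ubar W \<beta>"
    unfolding h_transmission_def
  proof (intro conjI ballI impI)
    show "transmission Ubar W \<beta>"
      by (rule factor_trans[OF U L1, where \<phi>="?p2"])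
         (use L_in[OF U L2] L_mul[OF U L2] L_0[OF U L2] L_1[OF U L2] L_e[OF U L2] mono12 in auto)
  next
    fix X Y assume "X \<in> stm_carrier Ubar" "Y \<in> stm_carrier Ubar"
      and c: "stm_lt Ubar (stm_mul Ubar (stm_e Ubar) X) (stm_mul Ubar (stm_e Ubar) Y) \<and>
        \<beta> (stm_mul Ubar (stm_e Ubar) X) = \<beta> (stm_mul Ubar (stm_e Ubar) Y)"
    then obtain x y where x: "x \<in> ?C" and y: "y \<in> ?C" and XY: "X = lam x" "Y = lam y"
      using L_car[OF U L1] by auto
    have c': "stm_lt Ubar (lam (?e x)) (lam (?e y))" "?p2 (?e x) = ?p2 (?e y)"
      using c eUbar x y XY by auto
    have "stm_lt U (?e x) (?e y)" using c'(1) refl1[OF x y] by (auto simp: stm_lt_def)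
    moreover have "\<alpha> (?e x) = \<alpha> (?e y)" using hp3[OF x y] c'(2) by simp
    ultimately have "lam y = lam (?e y)" using hp x y by blast
    then show "\<beta> Y \<in> ghosts W" using XY L_ghosts[OF U L2] y by auto
  qed
  have H3: "h_transmission W Wbar \<mu>"
    unfolding h_transmission_def
  proof (intro conjI ballI impI)
    show "transmission W Wbar \<mu>"
      by (rule factor_trans[OF U L2, where \<phi>="?p3"])
         (use L_in[OF U L3] L_mul[OF U L3] L_0[OF U L3] L_1[OF U L3] L_e[OF U L3] mono23 in auto)
  next
    fix X Y assume "X \<in> stm_carrier W" "Y \<in> stm_carrier W"
      and c: "stm_lt W (stm_mul W (stm_e W) X) (stm_mul W (stm_e W) Y) \<and>
        \<mu> (stm_mul W (stm_e W) X) = \<mu> (stm_mul W (stm_e W) Y)"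
    then obtain x y where x: "x \<in> ?C" and y: "y \<in> ?C" and XY: "X = ?p2 x" "Y = ?p2 y"
      using L_car[OF U L2] by auto
    have c': "stm_lt W (?p2 (?e x)) (?p2 (?e y))" "?p3 (?e x) = ?p3 (?e y)"
      using c L_ee[OF U L2] x y XY by auto
    have "T (?p2 (?e x)) (?p2 (?e y))" using muT eC x y c'(2) by blast
    then have "?p2 (?e y) = ?p2 (?e x)" using tang[OF x eC[OF y]] e_e[OF U y] by simp
    then show "\<mu> Y \<in> ghosts Wbar" using c'(1) by (simp add: stm_lt_def)
  qed
  have H4: "h_transmission Wbar V \<rho>"
    unfolding h_transmission_def
  proof (intro conjI ballI impI)
    show "transmission Wbar V \<rho>" using \<rho>tr .
  next
    fix X Y assume X: "X \<in> stm_carrier Wbar" and Y: "Y \<in> stm_carrier Wbar"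
      and c: "stm_lt Wbar (stm_mul Wbar (stm_e Wbar) X) (stm_mul Wbar (stm_e Wbar) Y) \<and>
        \<rho> (stm_mul Wbar (stm_e Wbar) X) = \<rho> (stm_mul Wbar (stm_e Wbar) Y)"
    have eW: "stm_e Wbar \<in> stm_carrier Wbar" using L_e[OF U L3] L_in[OF U L3] sm_e_in[OF U] by metis
    have "stm_mul Wbar (stm_e Wbar) X \<in> stm_carrier Wbar" "stm_mul Wbar (stm_e Wbar) Y \<in> stm_carrier Wbar"
      using L_closed[OF U L3] eW X Y by auto
    then show "\<rho> Y \<in> ghosts V" using c \<rho>inj unfolding inj_on_def stm_lt_def by blast
  qed
  have add1: "\<And>a b. a \<in> ?C \<Longrightarrow> b \<in> ?C \<Longrightarrow> lam (stm_add U a b) = stm_add Ubar (lam a) (lam b)"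
  proof -
    fix a b assume a: "a \<in> ?C" and b: "b \<in> ?C"
    show "lam (stm_add U a b) = stm_add Ubar (lam a) (lam b)"
    proof (rule add_pres[OF U _ _ _ _ a b])
      fix x assume "x \<in> ?C" then show "lam (?e x) = stm_mul Ubar (stm_e Ubar) (lam x)" by (rule L_ee[OF U L1])
    next
      fix x y assume "x \<in> ?C" "y \<in> ?C" "stm_le U (?e x) (?e y)"
      then show "stm_le Ubar (lam (?e x)) (lam (?e y))" by (rule L_mono[OF U L1])
    next
      fix x y assume "x \<in> ?C" "y \<in> ?C" "stm_le Ubar (lam (?e x)) (lam (?e y))" "stm_le Ubar (lam (?e y)) (lam (?e x))"
      then show "lam (?e x) = lam (?e y)" by (rule anti1)
    next
      fix x y assume x: "x \<in> ?C" and y: "y \<in> ?C" and lt: "stm_lt U (?e x) (?e y)" and eq: "lam (?e x) = lam (?e y)"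
      have "?p3 (?e x) = ?p3 (?e y)" using eq by simp
      then have "\<alpha> (?e x) = \<alpha> (?e y)" using hp3[OF x y] by simp
      then have "lam y = lam (?e y)" using hp[OF x y lt] by simp
      then show "lam y = lam (?e y)" by simp
    qed
  qed
  have add2: "\<And>a b. a \<in> ?C \<Longrightarrow> b \<in> ?C \<Longrightarrow> ?p2 (stm_add U a b) = stm_add W (?p2 a) (?p2 b)"
  proof -
    fix a b assume a: "a \<in> ?C" and b: "b \<in> ?C"
    show "?p2 (stm_add U a b) = stm_add W (?p2 a) (?p2 b)"
    proof (rule add_pres[OF U _ _ _ _ a b])
      fix x assume "x \<in> ?C" then show "?p2 (?e x) = stm_mul W (stm_e W) (?p2 x)" by (rule L_ee[OF U L2])
    next
      fix x y assume "x \<in> ?C" "y \<in> ?C" "stm_le U (?e x) (?e y)"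
      then show "stm_le W (?p2 (?e x)) (?p2 (?e y))" by (rule L_mono[OF U L2])
    next
      fix x y assume "x \<in> ?C" "y \<in> ?C" "stm_le W (?p2 (?e x)) (?p2 (?e y))" "stm_le W (?p2 (?e y)) (?p2 (?e x))"
      then show "?p2 (?e x) = ?p2 (?e y)" by (rule anti2)
    next
      fix x y assume x: "x \<in> ?C" and y: "y \<in> ?C" and lt: "stm_lt U (?e x) (?e y)" and eq: "?p2 (?e x) = ?p2 (?e y)"
      have "?p3 (?e x) = ?p3 (?e y)" using eq by simp
      then have "\<alpha> (?e x) = \<alpha> (?e y)" using hp3[OF x y] by simp
      then have "lam y = lam (?e y)" using hp[OF x y lt] by simp
      then show "?p2 y = ?p2 (?e y)" by simp
    qed
  qed
  have add3: "\<And>a b. a \<in> ?C \<Longrightarrow> b \<in> ?C \<Longrightarrow> ?p3 (stm_add U a b) = stm_add Wbar (?p3 a) (?p3 b)"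
  proof -
    fix a b assume a: "a \<in> ?C" and b: "b \<in> ?C"
    show "?p3 (stm_add U a b) = stm_add Wbar (?p3 a) (?p3 b)"
    proof (rule add_pres[OF U _ _ _ _ a b])
      fix x assume "x \<in> ?C" then show "?p3 (?e x) = stm_mul Wbar (stm_e Wbar) (?p3 x)" by (rule L_ee[OF U L3])
    next
      fix x y assume "x \<in> ?C" "y \<in> ?C" "stm_le U (?e x) (?e y)"
      then show "stm_le Wbar (?p3 (?e x)) (?p3 (?e y))" by (rule L_mono[OF U L3])
    next
      fix x y assume "x \<in> ?C" "y \<in> ?C" "stm_le Wbar (?p3 (?e x)) (?p3 (?e y))" "stm_le Wbar (?p3 (?e y)) (?p3 (?e x))"
      then show "?p3 (?e x) = ?p3 (?e y)" by (rule anti3)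
    next
      fix x y assume x: "x \<in> ?C" and y: "y \<in> ?C" and lt: "stm_lt U (?e x) (?e y)" and eq: "?p3 (?e x) = ?p3 (?e y)"
      have "?p3 (?e x) = ?p3 (?e y)" using eq by simp
      then have "\<alpha> (?e x) = \<alpha> (?e y)" using hp3[OF x y] by simp
      then have "lam y = lam (?e y)" using hp[OF x y lt] by simp
      then show "?p3 y = ?p3 (?e y)" by simp
    qed
  qed
  have addA: "\<And>a b. a \<in> ?C \<Longrightarrow> b \<in> ?C \<Longrightarrow> \<alpha> (stm_add U a b) = stm_add V (\<alpha> a) (\<alpha> b)"
  proof -
    fix a b assume a: "a \<in> ?C" and b: "b \<in> ?C"
    show "\<alpha> (stm_add U a b) = stm_add V (\<alpha> a) (\<alpha> b)"
    proof (rule add_pres[OF U _ _ _ _ a b])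
      fix x assume "x \<in> ?C" then show "\<alpha> (?e x) = stm_mul V (stm_e V) (\<alpha> x)" by (rule \<alpha>e)
    next
      fix x y assume "x \<in> ?C" "y \<in> ?C" "stm_le U (?e x) (?e y)"
      then show "stm_le V (\<alpha> (?e x)) (\<alpha> (?e y))" by (rule \<alpha>mono)
    next
      fix x y assume x: "x \<in> ?C" and y: "y \<in> ?C" and l1: "stm_le V (\<alpha> (?e x)) (\<alpha> (?e y))" and l2: "stm_le V (\<alpha> (?e y)) (\<alpha> (?e x))"
      show "\<alpha> (?e x) = \<alpha> (?e y)" by (rule sm_antisym[OF V \<alpha>g[OF x] \<alpha>g[OF y] l1 l2])
    next
      fix x y assume x: "x \<in> ?C" and y: "y \<in> ?C" and lt: "stm_lt U (?e x) (?e y)" and eq: "\<alpha> (?e x) = \<alpha> (?e y)"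
      have "\<alpha> y \<in> ghosts V" by (rule \<alpha>h[OF x y lt eq])
      then show "\<alpha> y = \<alpha> (?e y)" using ghost_fix[OF V] \<alpha>e[OF y] by simp
    qed
  qed
  have part2: "is_semiring U \<longrightarrow>
            is_semiring Ubar \<and> is_semiring W \<and> is_semiring Wbar \<and> is_semiring V \<and>
            semiring_hom U Ubar lam \<and> semiring_hom Ubar W \<beta> \<and>
            semiring_hom W Wbar \<mu> \<and> semiring_hom Wbar V \<rho>"
  proof
    assume S: "is_semiring U"
    have s1: "is_semiring Ubar" using semiring_transfer[OF U S L_car[OF U L1] L_mul[OF U L1] add1] .
    have s2: "is_semiring W" using semiring_transfer[OF U S L_car[OF U L2] L_mul[OF U L2] add2] by blast
    have s3: "is_semiring Wbar" using semiring_transfer[OF U S L_car[OF U L3] L_mul[OF U L3] add3] by blast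
    have s4: "is_semiring V" using semiring_transfer[OF U S surj[symmetric] \<alpha>m addA] .
    have m1: "semiring_hom U Ubar lam"
      unfolding semiring_hom_def using L_in[OF U L1] L_0[OF U L1] L_1[OF U L1] L_mul[OF U L1] add1 by blast
    have m2: "semiring_hom Ubar W \<beta>"
      by (rule factor_hom[OF U L_car[OF U L1] L_mul[OF U L1] add1 L_0[OF U L1] L_1[OF U L1],
           where \<phi>="?p2"]) (use L_in[OF U L2] L_mul[OF U L2] L_0[OF U L2] L_1[OF U L2] add2 in auto)
    have m3: "semiring_hom W Wbar \<mu>"
      by (rule factor_hom[OF U L_car[OF U L2] L_mul[OF U L2] add2 L_0[OF U L2] L_1[OF U L2],
           where \<phi>="?p3"]) (use L_in[OF U L3] L_mul[OF U L3] L_0[OF U L3] L_1[OF U L3] add3 in auto)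
    have m4: "semiring_hom Wbar V \<rho>"
      by (rule factor_hom[OF U L_car[OF U L3] L_mul[OF U L3] add3 L_0[OF U L3] L_1[OF U L3],
           where \<phi>="\<alpha>"]) (use \<alpha>in \<alpha>m addA \<alpha>c fact in auto)
    show "is_semiring Ubar \<and> is_semiring W \<and> is_semiring Wbar \<and> is_semiring V \<and>
            semiring_hom U Ubar lam \<and> semiring_hom Ubar W \<beta> \<and>
            semiring_hom W Wbar \<mu> \<and> semiring_hom Wbar V \<rho>"
      using s1 s2 s3 s4 m1 m2 m3 m4 by blast
  qed
  show ?thesis using H1 H2 H3 H4 part2 by blast
qed

end
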